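(* Let $n\ge2$, let $q\in\mathbb C$ with $0<|q|<1$ and fix an $n$-th root $q^{1/n}$. Let $A^*$ be the $(n-1)\times(n-1)$ matrix $A^*_{\alpha\beta}=n\delta_{\alpha\beta}-1$. For nonzero complex $\mu_1,\dots,\mu_{n-1}$ set $\mu_n:=q^{-1}(\mu_1\cdots\mu_{n-1})^{-1}$ and $$\Theta^{(1)}(\mu)=\sum_{\vec k\in\mathbb Z^{n-1}}q^{\frac1n\{(\vec k,A^*\vec k)+(\vec 1,\vec k)\}}\mu_1^{k_1}\cdots\mu_{n-1}^{k_{n-1}},$$ where $(\vec k,A^*\vec k)=\sum_{\alpha,\beta}k_\alpha A^*_{\alpha\beta}k_\beta$ and $(\vec1,\vec k)=\sum_\alpha k_\alpha$, and $q^{m/n}:=(q^{1/n})^m$. Then the series converges, and for every $\alpha=1,\dots,n$, $$q\mu_\alpha\,\Theta^{(1)}\bigl(\nabla^\alpha(\mu)\bigr)=\Theta^{(1)}(\mu),$$ where $\nabla^\alpha(\mu_\beta)=q^{2(\delta_{\alpha\beta}-1/n)}\mu_\beta$ for $\beta=1,\dots,n$ (this shift preserves $\prod_\beta\mu_\beta=q^{-1}$). With $q=e^{2\pi i\tau}$, $q^{1/n}\mu_\alpha=e^{2\pi iz_\alpha}$ and $\Omega_{\alpha\beta}=2\tau(\delta_{\alpha\beta}-\frac1n)$, one has $\Theta^{(1)}=\sum_{\vec k\in\mathbb Z^{n-1}}\exp\{\pi i(\vec k,\Omega\vec k)+2\pi i(\vec k,\vec z)\}$, a Riemann theta function.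
   Context: This function is the candidate evolution operator for the $q$-deformed isotropic top on the $SL_q(n)$ Heisenberg double, whose evolution equations are the displayed functional equations in the spectral variables $\mu_1,\dots,\mu_n$ subject to $\prod_{\alpha=1}^n\mu_\alpha=q^{-1}$. *)

theory Defs
  imports "HOL-Analysis.Analysis"
begin

definition lattice :: "nat \<Rightarrow> (nat \<Rightarrow> int) set" where
  "lattice n = PiE {1..n-1} (\<lambda>_. UNIV)"

definition Astar_form :: "nat \<Rightarrow> (nat \<Rightarrow> int) \<Rightarrow> int" where
  "Astar_form n k = (\<Sum>a\<in>{1..n-1}. \<Sum>b\<in>{1..n-1}.
      k a * ((if a = b then int n else 0) - 1) * k b)"

text \<open>Term of the theta series; \<open>r\<close> is the fixed n-th root of q, \<open>q^{m/n} = r^m\<close>.\<close>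
definition theta_term :: "nat \<Rightarrow> complex \<Rightarrow> (nat \<Rightarrow> complex) \<Rightarrow> (nat \<Rightarrow> int) \<Rightarrow> complex" where
  "theta_term n r \<mu> k = r powi (Astar_form n k + (\<Sum>a\<in>{1..n-1}. k a))
      * (\<Prod>a\<in>{1..n-1}. \<mu> a powi k a)"

definition Theta1 :: "nat \<Rightarrow> complex \<Rightarrow> (nat \<Rightarrow> complex) \<Rightarrow> complex" where
  "Theta1 n r \<mu> = infsum (theta_term n r \<mu>) (lattice n)"

definition mu_ext :: "nat \<Rightarrow> complex \<Rightarrow> (nat \<Rightarrow> complex) \<Rightarrow> nat \<Rightarrow> complex" where
  "mu_ext n q \<mu> b = (if b = n then inverse (q * (\<Prod>a\<in>{1..n-1}. \<mu> a)) else \<mu> b)"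

text \<open>Shift \<open>\<nabla>^\<alpha>(\<mu>_\<beta>) = q^{2(\<delta>_{\<alpha>\<beta>} - 1/n)} \<mu>_\<beta>\<close>, with \<open>q^{-2/n} = r^{-2}\<close>.\<close>
definition nabla :: "complex \<Rightarrow> complex \<Rightarrow> nat \<Rightarrow> (nat \<Rightarrow> complex) \<Rightarrow> nat \<Rightarrow> complex" where
  "nabla q r \<alpha> \<mu> b = (if b = \<alpha> then q^2 else 1) * r powi (-2) * \<mu> b"

end

theory Submission
  imports Defs
begin


lemma prod_powi_sum:
  fixes x :: complex
  assumes "x \<noteq> 0" "finite A"
  shows "(\<Prod>a\<in>A. x powi f a) = x powi (\<Sum>a\<in>A. f a)"
  using assms(2) by (induction A rule: finite_induct) (auto simp: power_int_add assms(1))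

lemma prod_powi_sum_real:
  fixes x :: real
  assumes "x \<noteq> 0" "finite A"
  shows "(\<Prod>a\<in>A. x powi f a) = x powi (\<Sum>a\<in>A. f a)"
  using assms(2) by (induction A rule: finite_induct) (auto simp: power_int_add assms(1))

lemma Astar_eq:
  "Astar_form n k = int n * (\<Sum>a\<in>{1..n-1}. k a * k a) - (\<Sum>a\<in>{1..n-1}. k a) * (\<Sum>a\<in>{1..n-1}. k a)"
proof -
  have "Astar_form n k = (\<Sum>a\<in>{1..n-1}. \<Sum>b\<in>{1..n-1}.
      (if a = b then int n * k a * k b else 0) - k a * k b)"
    unfolding Astar_form_def by (intro sum.cong refl) (auto simp: algebra_simps)
  also have "\<dots> = (\<Sum>a\<in>{1..n-1}. int n * k a * k a - k a * (\<Sum>b\<in>{1..n-1}. k b))"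
    by (simp add: sum_subtractf sum_distrib_left sum.delta)
  also have "\<dots> = int n * (\<Sum>a\<in>{1..n-1}. k a * k a) - (\<Sum>a\<in>{1..n-1}. k a) * (\<Sum>a\<in>{1..n-1}. k a)"
    apply (simp add: sum_subtractf sum_distrib_left sum_distrib_right mult.assoc)
    apply (subst sum.swap) apply (simp add: mult.commute)
    done
  finally show ?thesis .
qed

lemma cs_ineq:
  fixes k :: "nat \<Rightarrow> int"
  shows "(\<Sum>a\<in>A. k a) * (\<Sum>a\<in>A. k a) \<le> int (card A) * (\<Sum>a\<in>A. k a * k a)"
proof (cases "finite A")
  case True
  have "0 \<le> (\<Sum>a\<in>A. \<Sum>b\<in>A. (k a - k b) * (k a - k b))"
    by (intro sum_nonneg) auto
  also have "\<dots> = (\<Sum>a\<in>A. \<Sum>b\<in>A. k a * k a + k b * k b - 2 * (k a * k b))"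
    by (intro sum.cong refl) (simp add: algebra_simps)
  also have "\<dots> = 2 * (int (card A) * (\<Sum>a\<in>A. k a * k a)) - 2 * ((\<Sum>a\<in>A. k a) * (\<Sum>a\<in>A. k a))"
    by (simp add: sum.distrib sum_subtractf sum_distrib_left sum_distrib_right algebra_simps)
  finally show ?thesis by simp
qed simp

lemma Q_ge:
  assumes "n \<ge> 2"
  shows "Astar_form n k \<ge> (\<Sum>a\<in>{1..n-1}. k a * k a)"
proof -
  have "card {1..n-1} = n - 1" by simp
  with cs_ineq[of k "{1..n-1}"] have
    "(\<Sum>a\<in>{1..n-1}. k a) * (\<Sum>a\<in>{1..n-1}. k a) \<le> int (n-1) * (\<Sum>a\<in>{1..n-1}. k a * k a)" by simp
  then show ?thesis using assms unfolding Astar_eq by (simp add: of_nat_diff algebra_simps)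
qed



lemma geo_sq:
  fixes s d :: real
  assumes "0 \<le> s" "s < 1" "0 \<le> d"
  shows "summable (\<lambda>m::nat. s^(m*m) * d^m)"
proof -
  have "(\<lambda>m. s^m * d) \<longlonglongrightarrow> 0 * d"
    by (intro tendsto_intros LIMSEQ_power_zero) (use assms in auto)
  hence "eventually (\<lambda>m. s^m * d < 1/2) sequentially"
    by (intro order_tendstoD(2)) auto
  then obtain M where M: "s^M * d < 1/2" by (auto simp: eventually_sequentially)
  show ?thesis
  proof (rule summable_comparison_test')
    show "summable (\<lambda>m. (1/2::real)^m)" by (rule summable_geometric) auto
    fix m assume "m \<ge> M"
    have "s^(m*m) \<le> s^(M*m)"
      by (rule power_decreasing) (use assms \<open>m \<ge> M\<close> in auto)
    hence "s^(m*m) * d^m \<le> s^(M*m) * d^m"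
      by (intro mult_right_mono) (use assms in auto)
    also have "\<dots> = (s^M * d)^m" by (simp add: power_mult power_mult_distrib)
    also have "\<dots> \<le> (1/2)^m"
      by (intro power_mono) (use M assms in auto)
    finally show "norm (s^(m*m) * d^m) \<le> (1/2)^m"
      using assms by simp
  qed
qed

lemma g_summable:
  fixes s c :: real
  assumes "0 < s" "s < 1" "0 < c"
  shows "(\<lambda>j::int. s powi (j*j+j) * c powi j) summable_on UNIV"
proof -
  let ?g = "\<lambda>j::int. s powi (j*j+j) * c powi j"
  have UN: "(UNIV :: int set) = range int \<union> range (\<lambda>m. - int m - 1)"
  proof -
    have "j \<in> range int \<union> range (\<lambda>m. - int m - 1)" for j :: int
    proof (cases "j \<ge> 0")
      case True then show ?thesis by (auto intro!: image_eqI[of _ _ "nat j"])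
    next
      case False then show ?thesis
        by (intro UnI2 image_eqI[of _ _ "nat (- j - 1)"]) auto
    qed
    thus ?thesis by auto
  qed
  have s1: "?g summable_on range int"
  proof -
    have "(\<lambda>m::nat. s^(m*m) * (s*c)^m) summable_on UNIV"
      using geo_sq[of s "s*c"] assms
      by (subst summable_on_UNIV_nonneg_real_iff) auto
    moreover have "(?g \<circ> int) = (\<lambda>m::nat. s^(m*m) * (s*c)^m)"
    proof
      fix m :: nat
      have "int m * int m + int m = int (m*m+m)" by simp
      then show "(?g \<circ> int) m = s^(m*m) * (s*c)^m"
        by (simp only: o_def power_int_of_nat) (simp add: power_add power_mult_distrib)
    qed
    ultimately show ?thesis by (subst summable_on_reindex) auto
  qed
  have s2: "?g summable_on range (\<lambda>m. - int m - 1)"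
  proof -
    have "(\<lambda>m::nat. s^(m*m) * (s/c)^m) summable_on UNIV"
      using geo_sq[of s "s/c"] assms
      by (subst summable_on_UNIV_nonneg_real_iff) auto
    hence "(\<lambda>m::nat. inverse c * (s^(m*m) * (s/c)^m)) summable_on UNIV"
      by (rule summable_on_cmult_right)
    moreover have "(?g \<circ> (\<lambda>m. - int m - 1)) = (\<lambda>m::nat. inverse c * (s^(m*m) * (s/c)^m))"
    proof
      fix m :: nat
      have e1: "(- int m - 1) * (- int m - 1) + (- int m - 1) = int (m*m+m)" by (simp add: algebra_simps)
      have e2: "(- int m - 1) = - int (Suc m)" by simp
      show "(?g \<circ> (\<lambda>m. - int m - 1)) m = inverse c * (s^(m*m) * (s/c)^m)"
        apply (simp only: o_def e1 power_int_of_nat)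
        apply (simp only: e2 power_int_minus power_int_of_nat)
        using assms by (simp add: power_add power_mult_distrib field_simps)
    qed
    moreover have "inj (\<lambda>m::nat. - int m - 1)" by (auto simp: inj_def)
    ultimately show ?thesis by (subst summable_on_reindex) auto
  qed
  have "?g summable_on (range int \<union> range (\<lambda>m. - int m - 1))"
    by (rule summable_on_Un_disjoint[OF s1 s2]) auto
  thus ?thesis using UN by simp
qed



lemma theta_summable:
  fixes n :: nat and q r :: complex and \<mu> :: "nat \<Rightarrow> complex"
  assumes "n \<ge> 2" and "0 < norm q" and "norm q < 1" and "r ^ n = q"
    and "\<forall>a\<in>{1..n-1}. \<mu> a \<noteq> 0"
  shows "theta_term n r \<mu> summable_on lattice n"
proof -
  define s where "s = norm r"
  have r0: "r \<noteq> 0" using assms by auto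
  have s0: "0 < s" using r0 s_def by simp
  have s1: "s < 1"
  proof (rule ccontr)
    assume "\<not> s < 1"
    hence "1 \<le> s^n" by (simp add: one_le_power)
    also have "s^n = norm q" using assms(4) s_def by (metis norm_power)
    finally show False using assms(3) by simp
  qed
  define G where "G a j = s powi (j*j+j) * norm (\<mu> a) powi j" for a :: nat and j :: int
  have G0: "0 \<le> G a j" for a j unfolding G_def using s0 by simp
  have Gs: "(\<lambda>j. norm (G a j)) summable_on UNIV" if "a \<in> {1..n-1}" for a
  proof -
    have "norm (\<mu> a) > 0" using assms(5) that by auto
    hence "G a summable_on UNIV" unfolding G_def using g_summable s0 s1 by blast
    thus ?thesis using G0 by simp
  qed
  have "Infinite_Set_Sum.abs_summable_on (\<lambda>k. \<Prod>a\<in>{1..n-1}. G a (k a)) (PiE {1..n-1} (\<lambda>_. UNIV))"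
  proof (intro abs_summable_on_prod_PiE)
    fix a :: nat assume "a \<in> {1..n-1}"
    from Gs[OF this] show "Infinite_Set_Sum.abs_summable_on (G a) UNIV"
      using abs_summable_equivalent[of "G a" UNIV] by simp
  qed auto
  hence P: "(\<lambda>k. norm (\<Prod>a\<in>{1..n-1}. G a (k a))) summable_on PiE {1..n-1} (\<lambda>_. UNIV)"
    by (simp only: abs_summable_equivalent)
  have bound: "norm (theta_term n r \<mu> k) \<le> norm (\<Prod>a\<in>{1..n-1}. G a (k a))" for k
  proof -
    let ?E = "Astar_form n k + (\<Sum>a\<in>{1..n-1}. k a)"
    let ?F = "(\<Sum>a\<in>{1..n-1}. k a * k a + k a)"
    have le: "?F \<le> ?E" using Q_ge[OF assms(1), of k] by (simp add: sum.distrib)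
    have F0: "0 \<le> ?F"
    proof (intro sum_nonneg)
      fix a
      have e: "k a * k a + k a = k a * (k a + 1)" by (simp add: algebra_simps)
      show "0 \<le> k a * k a + k a"
      proof (cases "k a \<ge> 0")
        case True thus ?thesis unfolding e by simp
      next
        case False thus ?thesis unfolding e by (intro mult_nonpos_nonpos) auto
      qed
    qed
    have "norm (theta_term n r \<mu> k) = s powi ?E * (\<Prod>a\<in>{1..n-1}. norm (\<mu> a) powi k a)"
      unfolding theta_term_def s_def by (simp add: norm_mult prod_norm[symmetric] norm_power_int)
    also have "\<dots> \<le> s powi ?F * (\<Prod>a\<in>{1..n-1}. norm (\<mu> a) powi k a)"
      by (intro mult_right_mono power_int_decreasing prod_nonneg) (use le s0 s1 in auto)
    also have "s powi ?F = (\<Prod>a\<in>{1..n-1}. s powi (k a * k a + k a))"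
      using prod_powi_sum_real[of s "{1..n-1}"] s0 by simp
    also have "(\<Prod>a\<in>{1..n-1}. s powi (k a * k a + k a)) * (\<Prod>a\<in>{1..n-1}. norm (\<mu> a) powi k a)
        = (\<Prod>a\<in>{1..n-1}. G a (k a))" unfolding G_def by (simp add: prod.distrib)
    also have "\<dots> = norm (\<Prod>a\<in>{1..n-1}. G a (k a))"
      using G0 by (simp add: prod_nonneg)
    finally show ?thesis .
  qed
  have "(\<lambda>k. norm (theta_term n r \<mu> k)) summable_on lattice n"
    unfolding lattice_def
    by (rule summable_on_comparison_test[OF P]) (use bound in auto)
  thus ?thesis by (rule abs_summable_summable)
qed



lemma sum_upd1:
  fixes k :: "nat \<Rightarrow> int"
  assumes "finite A" "\<alpha> \<in> A"
  shows "(\<Sum>a\<in>A. (k(\<alpha> := k \<alpha> + 1)) a) = (\<Sum>a\<in>A. k a) + 1"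
    and "(\<Sum>a\<in>A. (k(\<alpha> := k \<alpha> + 1)) a * (k(\<alpha> := k \<alpha> + 1)) a) = (\<Sum>a\<in>A. k a * k a) + 2 * k \<alpha> + 1"
proof -
  have "(\<Sum>a\<in>A. (k(\<alpha> := k \<alpha> + 1)) a) = (\<Sum>a\<in>A. k a + (if a = \<alpha> then 1 else 0))"
    by (intro sum.cong) auto
  thus "(\<Sum>a\<in>A. (k(\<alpha> := k \<alpha> + 1)) a) = (\<Sum>a\<in>A. k a) + 1"
    using assms by (simp add: sum.distrib)
  have "(\<Sum>a\<in>A. (k(\<alpha> := k \<alpha> + 1)) a * (k(\<alpha> := k \<alpha> + 1)) a)
     = (\<Sum>a\<in>A. k a * k a + (if a = \<alpha> then 2 * k a + 1 else 0))"
    by (intro sum.cong) (auto simp: algebra_simps)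
  thus "(\<Sum>a\<in>A. (k(\<alpha> := k \<alpha> + 1)) a * (k(\<alpha> := k \<alpha> + 1)) a) = (\<Sum>a\<in>A. k a * k a) + 2 * k \<alpha> + 1"
    using assms by (simp add: sum.distrib)
qed

lemma term_shift1:
  fixes n :: nat and q r :: complex and \<mu> :: "nat \<Rightarrow> complex"
  assumes "n \<ge> 2" "r ^ n = q" "r \<noteq> 0" "\<mu> \<alpha> \<noteq> 0" "\<alpha> \<in> {1..n-1}"
  shows "theta_term n r \<mu> (k(\<alpha> := k \<alpha> + 1))
       = q * \<mu> \<alpha> * theta_term n r (nabla q r \<alpha> (mu_ext n q \<mu>)) k"
proof -
  define S1 where "S1 = (\<Sum>a\<in>{1..n-1}. k a)"
  define S2 where "S2 = (\<Sum>a\<in>{1..n-1}. k a * k a)"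
  define M where "M = (\<Prod>a\<in>{1..n-1}. \<mu> a powi k a)"
  let ?k = "k(\<alpha> := k \<alpha> + 1)"
  have E1: "Astar_form n ?k + (\<Sum>a\<in>{1..n-1}. ?k a) = int n * (S2 + 2 * k \<alpha> + 1) - (S1 + 1) * (S1 + 1) + (S1 + 1)"
    unfolding Astar_eq sum_upd1[OF finite_atLeastAtMost assms(5)] S1_def S2_def by simp
  have P1: "(\<Prod>a\<in>{1..n-1}. \<mu> a powi ?k a) = \<mu> \<alpha> * M"
  proof -
    have "(\<Prod>a\<in>{1..n-1}. \<mu> a powi ?k a) = (\<Prod>a\<in>{1..n-1}. \<mu> a powi k a * (if a = \<alpha> then \<mu> a else 1))"
      by (intro prod.cong refl) (auto simp: power_int_add assms(4))
    also have "\<dots> = M * \<mu> \<alpha>" unfolding M_def prod.distrib using assms(5) by (simp add: prod.delta)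
    finally show ?thesis by simp
  qed
  have L: "theta_term n r \<mu> ?k = r powi (int n * (S2 + 2 * k \<alpha> + 1) - (S1 + 1) * (S1 + 1) + (S1 + 1)) * (\<mu> \<alpha> * M)"
    unfolding theta_term_def E1 P1 ..
  have radd: "r powi (a + b) = r powi a * r powi b" for a b :: int
    by (simp add: power_int_add assms(3))
  have rr: "(r powi (-2)) powi j = r powi (-2 * j)" for j :: int
    by (simp only: power_int_mult)
  have P2: "(\<Prod>a\<in>{1..n-1}. (nabla q r \<alpha> (mu_ext n q \<mu>)) a powi k a)
      = (\<Prod>a\<in>{1..n-1}. (if a = \<alpha> then (q^2) powi k a else 1) * (r powi (-2 * k a)) * \<mu> a powi k a)"
    using rr by (intro prod.cong refl) (auto simp: nabla_def mu_ext_def power_int_mult_distrib)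
  also have "\<dots> = (q^2) powi k \<alpha> * r powi (-2 * S1) * M"
    unfolding prod.distrib M_def S1_def using assms(5)
    by (simp add: prod.delta prod_powi_sum assms(3) sum_distrib_left)
  also have "(q^2) powi k \<alpha> = r powi (2 * int n * k \<alpha>)"
    unfolding assms(2)[symmetric] by (simp add: power_int_power power_mult[symmetric] mult.commute)
  finally have P2': "(\<Prod>a\<in>{1..n-1}. (nabla q r \<alpha> (mu_ext n q \<mu>)) a powi k a) = r powi (2 * int n * k \<alpha>) * r powi (-2 * S1) * M" .
  have R: "q * \<mu> \<alpha> * theta_term n r (nabla q r \<alpha> (mu_ext n q \<mu>)) k
      = r powi int n * r powi (int n * S2 - S1 * S1 + S1) * r powi (2 * int n * k \<alpha>) * r powi (-2 * S1) * (\<mu> \<alpha> * M)"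
    unfolding theta_term_def P2' Astar_eq S1_def[symmetric] S2_def[symmetric]
    using assms(2) by (simp add: ac_simps)
  also have "\<dots> = r powi (int n + (int n * S2 - S1 * S1 + S1) + 2 * int n * k \<alpha> + -2 * S1) * (\<mu> \<alpha> * M)"
    by (simp only: radd)
  also have "int n + (int n * S2 - S1 * S1 + S1) + 2 * int n * k \<alpha> + -2 * S1
      = int n * (S2 + 2 * k \<alpha> + 1) - (S1 + 1) * (S1 + 1) + (S1 + 1)"
    by (simp add: algebra_simps)
  finally have R': "q * \<mu> \<alpha> * theta_term n r (nabla q r \<alpha> (mu_ext n q \<mu>)) k
     = r powi (int n * (S2 + 2 * k \<alpha> + 1) - (S1 + 1) * (S1 + 1) + (S1 + 1)) * (\<mu> \<alpha> * M)" .
  show ?thesis by (simp only: L R')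
qed

lemma sum_shift2:
  fixes k :: "nat \<Rightarrow> int"
  assumes "finite A"
  shows "(\<Sum>a\<in>A. (\<lambda>a. if a \<in> A then k a - 1 else k a) a) = (\<Sum>a\<in>A. k a) - int (card A)"
    and "(\<Sum>a\<in>A. (\<lambda>a. if a \<in> A then k a - 1 else k a) a * (\<lambda>a. if a \<in> A then k a - 1 else k a) a)
        = (\<Sum>a\<in>A. k a * k a) - 2 * (\<Sum>a\<in>A. k a) + int (card A)"
proof -
  have "(\<Sum>a\<in>A. (\<lambda>a. if a \<in> A then k a - 1 else k a) a) = (\<Sum>a\<in>A. k a - 1)"
    by (intro sum.cong) auto
  thus "(\<Sum>a\<in>A. (\<lambda>a. if a \<in> A then k a - 1 else k a) a) = (\<Sum>a\<in>A. k a) - int (card A)"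
    by (simp add: sum_subtractf)
  have "(\<Sum>a\<in>A. (\<lambda>a. if a \<in> A then k a - 1 else k a) a * (\<lambda>a. if a \<in> A then k a - 1 else k a) a)
     = (\<Sum>a\<in>A. k a * k a - 2 * k a + 1)"
    by (intro sum.cong) (auto simp: algebra_simps)
  thus "(\<Sum>a\<in>A. (\<lambda>a. if a \<in> A then k a - 1 else k a) a * (\<lambda>a. if a \<in> A then k a - 1 else k a) a)
        = (\<Sum>a\<in>A. k a * k a) - 2 * (\<Sum>a\<in>A. k a) + int (card A)"
    by (simp add: sum.distrib sum_subtractf sum_distrib_left)
qed

lemma term_shift2:
  fixes n :: nat and q r :: complex and \<mu> :: "nat \<Rightarrow> complex"
  assumes "n \<ge> 2" "r ^ n = q" "r \<noteq> 0" "\<forall>a\<in>{1..n-1}. \<mu> a \<noteq> 0"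
  shows "theta_term n r \<mu> (\<lambda>a. if a \<in> {1..n-1} then k a - 1 else k a)
       = q * mu_ext n q \<mu> n * theta_term n r (nabla q r n (mu_ext n q \<mu>)) k"
proof -
  define S1 where "S1 = (\<Sum>a\<in>{1..n-1}. k a)"
  define S2 where "S2 = (\<Sum>a\<in>{1..n-1}. k a * k a)"
  define M where "M = (\<Prod>a\<in>{1..n-1}. \<mu> a powi k a)"
  define P where "P = (\<Prod>a\<in>{1..n-1}. \<mu> a)"
  define m where "m = int (n - 1)"
  let ?k = "(\<lambda>a. if a \<in> {1..n-1} then k a - 1 else k a)"
  have q0: "q \<noteq> 0" using assms(2,3) by auto
  have P0: "P \<noteq> 0" unfolding P_def using assms(4) by simp
  have radd: "r powi (a + b) = r powi a * r powi b" for a b :: int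
    by (simp add: power_int_add assms(3))
  have rr: "(r powi (-2)) powi j = r powi (-2 * j)" for j :: int
    by (simp only: power_int_mult)
  have E1: "Astar_form n ?k + (\<Sum>a\<in>{1..n-1}. ?k a) = int n * (S2 - 2 * S1 + m) - (S1 - m) * (S1 - m) + (S1 - m)"
    unfolding Astar_eq sum_shift2[OF finite_atLeastAtMost] S1_def S2_def m_def by simp
  have P1: "(\<Prod>a\<in>{1..n-1}. \<mu> a powi ?k a) = M * inverse P"
  proof -
    have "(\<Prod>a\<in>{1..n-1}. \<mu> a powi ?k a) = (\<Prod>a\<in>{1..n-1}. \<mu> a powi k a * inverse (\<mu> a))"
      using assms(4) by (intro prod.cong refl) (auto simp: power_int_diff field_simps)
    also have "\<dots> = M * inverse P" unfolding M_def P_def prod.distrib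
      using prod_inversef[of \<mu> "{1..n-1}"] by (simp add: o_def)
    finally show ?thesis .
  qed
  have L: "theta_term n r \<mu> ?k = r powi (int n * (S2 - 2 * S1 + m) - (S1 - m) * (S1 - m) + (S1 - m)) * (M * inverse P)"
    unfolding theta_term_def E1 P1 ..
  have P2: "(\<Prod>a\<in>{1..n-1}. (nabla q r n (mu_ext n q \<mu>)) a powi k a)
      = (\<Prod>a\<in>{1..n-1}. (r powi (-2 * k a)) * \<mu> a powi k a)"
    using rr by (intro prod.cong refl) (auto simp: nabla_def mu_ext_def power_int_mult_distrib)
  also have "\<dots> = r powi (-2 * S1) * M"
    unfolding prod.distrib M_def S1_def
    by (simp add: prod_powi_sum assms(3) sum_distrib_left)
  finally have P2': "(\<Prod>a\<in>{1..n-1}. (nabla q r n (mu_ext n q \<mu>)) a powi k a) = r powi (-2 * S1) * M" .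
  have mn: "q * mu_ext n q \<mu> n = inverse P"
    unfolding mu_ext_def P_def[symmetric] using q0 P0 by (simp add: field_simps)
  have R: "q * mu_ext n q \<mu> n * theta_term n r (nabla q r n (mu_ext n q \<mu>)) k
      = r powi (int n * S2 - S1 * S1 + S1) * r powi (-2 * S1) * (M * inverse P)"
    unfolding mn theta_term_def P2' Astar_eq S1_def[symmetric] S2_def[symmetric]
    by (simp add: ac_simps)
  also have "\<dots> = r powi ((int n * S2 - S1 * S1 + S1) + -2 * S1) * (M * inverse P)"
    by (simp only: radd)
  also have "(int n * S2 - S1 * S1 + S1) + -2 * S1
      = int n * (S2 - 2 * S1 + m) - (S1 - m) * (S1 - m) + (S1 - m)"
    using assms(1) unfolding m_def by (simp add: algebra_simps of_nat_diff)
  finally have R': "q * mu_ext n q \<mu> n * theta_term n r (nabla q r n (mu_ext n q \<mu>)) k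
     = r powi (int n * (S2 - 2 * S1 + m) - (S1 - m) * (S1 - m) + (S1 - m)) * (M * inverse P)" .
  show ?thesis by (simp only: L R')
qed



lemma bij1:
  assumes "\<alpha> \<in> {1..n-1}"
  shows "bij_betw (\<lambda>k. k(\<alpha> := k \<alpha> + 1)) (lattice n) (lattice n)"
  by (rule bij_betw_byWitness[of _ "\<lambda>k. k(\<alpha> := k \<alpha> - 1)"])
     (use assms in \<open>auto simp: lattice_def PiE_def extensional_def\<close>)

lemma bij2:
  shows "bij_betw (\<lambda>k a. if a \<in> {1..n-1} then k a - 1 else k a) (lattice n) (lattice n)"
  by (rule bij_betw_byWitness[of _ "\<lambda>k a. if a \<in> {1..n-1} then k a + 1 else k a"])
     (auto simp: lattice_def PiE_def extensional_def)

lemma funeq: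
  fixes n :: nat and q r :: complex and \<mu> :: "nat \<Rightarrow> complex"
  assumes "n \<ge> 2" "r ^ n = q" "r \<noteq> 0" "\<forall>a\<in>{1..n-1}. \<mu> a \<noteq> 0" "\<alpha> \<in> {1..n}"
  shows "q * mu_ext n q \<mu> \<alpha> * Theta1 n r (nabla q r \<alpha> (mu_ext n q \<mu>)) = Theta1 n r \<mu>"
proof (cases "\<alpha> = n")
  case True
  have "Theta1 n r \<mu> = infsum (\<lambda>k. theta_term n r \<mu> (\<lambda>a. if a \<in> {1..n-1} then k a - 1 else k a)) (lattice n)"
    unfolding Theta1_def by (rule infsum_reindex_bij_betw[OF bij2, symmetric])
  also have "\<dots> = infsum (\<lambda>k. q * mu_ext n q \<mu> n * theta_term n r (nabla q r n (mu_ext n q \<mu>)) k) (lattice n)"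
    using term_shift2[OF assms(1-4)] by simp
  also have "\<dots> = q * mu_ext n q \<mu> n * Theta1 n r (nabla q r n (mu_ext n q \<mu>))"
    unfolding Theta1_def by (rule infsum_cmult_right')
  finally show ?thesis using True by simp
next
  case False
  hence a: "\<alpha> \<in> {1..n-1}" using assms(5) by auto
  have mu: "mu_ext n q \<mu> \<alpha> = \<mu> \<alpha>" using False by (simp add: mu_ext_def)
  have "Theta1 n r \<mu> = infsum (\<lambda>k. theta_term n r \<mu> (k(\<alpha> := k \<alpha> + 1))) (lattice n)"
    unfolding Theta1_def by (rule infsum_reindex_bij_betw[OF bij1[OF a], symmetric])
  also have "\<dots> = infsum (\<lambda>k. q * \<mu> \<alpha> * theta_term n r (nabla q r \<alpha> (mu_ext n q \<mu>)) k) (lattice n)"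
    using term_shift1[OF assms(1-3) _ a] assms(4) a by simp
  also have "\<dots> = q * \<mu> \<alpha> * Theta1 n r (nabla q r \<alpha> (mu_ext n q \<mu>))"
    unfolding Theta1_def by (rule infsum_cmult_right')
  finally show ?thesis using mu by simp
qed

lemma nabla_prod:
  fixes n :: nat and q r :: complex and \<mu> :: "nat \<Rightarrow> complex"
  assumes "n \<ge> 2" "r ^ n = q" "r \<noteq> 0" "\<forall>a\<in>{1..n-1}. \<mu> a \<noteq> 0" "\<alpha> \<in> {1..n}"
  shows "(\<Prod>b\<in>{1..n}. nabla q r \<alpha> (mu_ext n q \<mu>) b) = inverse q"
proof -
  define P where "P = (\<Prod>a\<in>{1..n-1}. \<mu> a)"
  have q0: "q \<noteq> 0" using assms(2,3) by auto
  have P0: "P \<noteq> 0" unfolding P_def using assms(4) by simp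
  have U: "{1..n} = insert n {1..n-1}" using assms(1) by auto
  have "(\<Prod>b\<in>{1..n}. mu_ext n q \<mu> b) = mu_ext n q \<mu> n * (\<Prod>b\<in>{1..n-1}. mu_ext n q \<mu> b)"
    unfolding U by (subst prod.insert) auto
  also have "(\<Prod>b\<in>{1..n-1}. mu_ext n q \<mu> b) = P"
    unfolding P_def by (intro prod.cong refl) (auto simp: mu_ext_def)
  also have "mu_ext n q \<mu> n = inverse (q * P)" by (simp add: mu_ext_def P_def)
  finally have M: "(\<Prod>b\<in>{1..n}. mu_ext n q \<mu> b) = inverse q"
    using P0 q0 by (simp add: field_simps)
  have "(\<Prod>b\<in>{1..n}. nabla q r \<alpha> (mu_ext n q \<mu>) b)
     = (\<Prod>b\<in>{1..n}. (if b = \<alpha> then q^2 else 1)) * (r powi (-2))^n * (\<Prod>b\<in>{1..n}. mu_ext n q \<mu> b)"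
    unfolding nabla_def prod.distrib by simp
  also have "(\<Prod>b\<in>{1..n}. (if b = \<alpha> then q^2 else 1)) = q^2"
    using assms(5) by (simp add: prod.delta)
  also have "(r powi (-2))^n = inverse (q^2)"
  proof -
    have "r ^ (n * 2) = q^2" using assms(2) by (simp add: power_mult)
    thus ?thesis by (simp add: power_int_minus power_inverse power_mult[symmetric] mult.commute)
  qed
  finally show ?thesis using M q0 by simp
qed



lemma exp_part:
  fixes n :: nat and r \<tau> :: complex and \<mu> z :: "nat \<Rightarrow> complex" and k :: "nat \<Rightarrow> int"
  assumes "n \<ge> 2" "exp (2 * pi * \<i> * \<tau> / of_nat n) = r"
    "\<forall>a\<in>{1..n-1}. r * \<mu> a = exp (2 * pi * \<i> * z a)"
  shows "theta_term n r \<mu> k = exp (pi * \<i> * (\<Sum>a\<in>{1..n-1}. \<Sum>b\<in>{1..n-1}.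
                    of_int (k a) * (2 * \<tau> * ((if a = b then 1 else 0) - 1 / of_nat n)) * of_int (k b))
                 + 2 * pi * \<i> * (\<Sum>a\<in>{1..n-1}. of_int (k a) * z a))"
proof -
  define w where "w = 2 * pi * \<i> * \<tau> / of_nat n"
  have n0: "(of_nat n :: complex) \<noteq> 0" using assms(1) by simp
  have D: "(\<Sum>a\<in>{1..n-1}. \<Sum>b\<in>{1..n-1}.
                    of_int (k a) * (2 * \<tau> * ((if a = b then 1 else 0) - 1 / of_nat n)) * of_int (k b))
        = 2 * \<tau> / of_nat n * of_int (Astar_form n k)"
    unfolding Astar_form_def of_int_sum of_int_mult sum_distrib_left
    by (intro sum.cong refl) (use n0 in \<open>auto simp: field_simps\<close>)
  have "pi * \<i> * (2 * \<tau> / of_nat n * of_int (Astar_form n k)) = of_int (Astar_form n k) * w"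
    unfolding w_def by (simp add: field_simps)
  moreover have "2 * pi * \<i> * (\<Sum>a\<in>{1..n-1}. of_int (k a) * z a)
      = (\<Sum>a\<in>{1..n-1}. of_int (k a) * (2 * pi * \<i> * z a))"
    by (simp add: sum_distrib_left ac_simps)
  ultimately have "exp (pi * \<i> * (\<Sum>a\<in>{1..n-1}. \<Sum>b\<in>{1..n-1}.
                    of_int (k a) * (2 * \<tau> * ((if a = b then 1 else 0) - 1 / of_nat n)) * of_int (k b))
                 + 2 * pi * \<i> * (\<Sum>a\<in>{1..n-1}. of_int (k a) * z a))
      = exp (of_int (Astar_form n k) * w) * (\<Prod>a\<in>{1..n-1}. exp (of_int (k a) * (2 * pi * \<i> * z a)))"
    unfolding D by (simp add: exp_add exp_sum)
  also have "exp (of_int (Astar_form n k) * w) = r powi Astar_form n k"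
    using assms(2) exp_power_int[of w "Astar_form n k"] unfolding w_def by simp
  also have "(\<Prod>a\<in>{1..n-1}. exp (of_int (k a) * (2 * pi * \<i> * z a))) = (\<Prod>a\<in>{1..n-1}. (r * \<mu> a) powi k a)"
    using assms(3) by (intro prod.cong refl) (simp add: exp_power_int[symmetric])
  also have "\<dots> = r powi (\<Sum>a\<in>{1..n-1}. k a) * (\<Prod>a\<in>{1..n-1}. \<mu> a powi k a)"
  proof -
    have r0: "r \<noteq> 0" using assms(2) by auto
    show ?thesis by (simp add: power_int_mult_distrib prod.distrib prod_powi_sum r0)
  qed
  finally show ?thesis unfolding theta_term_def
    using assms(2) by (simp add: power_int_add mult.assoc exp_not_eq_zero[of "2 * pi * \<i> * \<tau> / of_nat n", unfolded assms(2)])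
qed

theorem mainTheorem13:
  fixes n :: nat and q r :: complex and \<mu> :: "nat \<Rightarrow> complex"
  assumes "n \<ge> 2" and "0 < norm q" and "norm q < 1" and "r ^ n = q"
    and "\<forall>a\<in>{1..n-1}. \<mu> a \<noteq> 0"
  shows "theta_term n r \<mu> summable_on lattice n
    \<and> (\<forall>\<alpha>\<in>{1..n}.
          (\<Prod>b\<in>{1..n}. nabla q r \<alpha> (mu_ext n q \<mu>) b) = inverse q
        \<and> q * mu_ext n q \<mu> \<alpha> * Theta1 n r (nabla q r \<alpha> (mu_ext n q \<mu>)) = Theta1 n r \<mu>)
    \<and> (\<forall>\<tau> z. exp (2 * pi * \<i> * \<tau>) = q \<and> exp (2 * pi * \<i> * \<tau> / of_nat n) = r
          \<and> (\<forall>a\<in>{1..n-1}. r * \<mu> a = exp (2 * pi * \<i> * z a))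
        \<longrightarrow> Theta1 n r \<mu> = (\<Sum>\<^sub>\<infinity>k\<in>lattice n.
              exp (pi * \<i> * (\<Sum>a\<in>{1..n-1}. \<Sum>b\<in>{1..n-1}.
                    of_int (k a) * (2 * \<tau> * ((if a = b then 1 else 0) - 1 / of_nat n)) * of_int (k b))
                 + 2 * pi * \<i> * (\<Sum>a\<in>{1..n-1}. of_int (k a) * z a))))"
proof -
  have r0: "r \<noteq> 0" using assms(1,2,4) by auto
  show ?thesis
  proof (intro conjI ballI allI impI)
    show "theta_term n r \<mu> summable_on lattice n" by (rule theta_summable[OF assms])
  next
    fix \<alpha> assume a: "\<alpha> \<in> {1..n}"
    show "(\<Prod>b\<in>{1..n}. nabla q r \<alpha> (mu_ext n q \<mu>) b) = inverse q"
      by (rule nabla_prod[OF assms(1) assms(4) r0 assms(5) a])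
    show "q * mu_ext n q \<mu> \<alpha> * Theta1 n r (nabla q r \<alpha> (mu_ext n q \<mu>)) = Theta1 n r \<mu>"
      by (rule funeq[OF assms(1) assms(4) r0 assms(5) a])
  next
    fix \<tau> z
    assume h: "exp (2 * pi * \<i> * \<tau>) = q \<and> exp (2 * pi * \<i> * \<tau> / of_nat n) = r
          \<and> (\<forall>a\<in>{1..n-1}. r * \<mu> a = exp (2 * pi * \<i> * z a))"
    show "Theta1 n r \<mu> = (\<Sum>\<^sub>\<infinity>k\<in>lattice n.
              exp (pi * \<i> * (\<Sum>a\<in>{1..n-1}. \<Sum>b\<in>{1..n-1}.
                    of_int (k a) * (2 * \<tau> * ((if a = b then 1 else 0) - 1 / of_nat n)) * of_int (k b))
                 + 2 * pi * \<i> * (\<Sum>a\<in>{1..n-1}. of_int (k a) * z a)))"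
      unfolding Theta1_def using exp_part[OF assms(1)] h by (intro infsum_cong) blast
  qed
qed

end
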